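(* Let $n\ge 2$ and let $\beta\in B_n$ be a braid whose closure is a knot. Write the unreduced Burau matrix in block form $$\psi_n(\beta)=\begin{pmatrix}\hat\beta_n&b_\beta\\ c_\beta&d_\beta\end{pmatrix}$$ with $\hat\beta_n$ of size $(n-1)\times(n-1)$, $b_\beta$ a column, $c_\beta$ a row and $d_\beta\in\mathbb{Z}[t^{\pm1}]$. Then $\det(I_{n-1}-\hat\beta_n)\neq0$ and, in $\mathbb{Q}(t)$, $$d_\beta+c_\beta(I_{n-1}-\hat\beta_n)^{-1}b_\beta=1.$$
   Context: $\psi_n\colon B_n\to\mathrm{GL}_n(\mathbb{Z}[t^{\pm1}])$ is the unreduced Burau representation sending the Artin generator $\sigma_i$ to $I_{i-1}\oplus\left(\begin{smallmatrix}1-t&t\\1&0\end{smallmatrix}\right)\oplus I_{n-i-1}$; $I_k$ is the $k\times k$ identity matrix. *)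

theory Defs
  imports "HOL-Computational_Algebra.Fraction_Field" "HOL-Computational_Algebra.Polynomial"
    "HOL-Combinatorics.Transposition"
    "Jordan_Normal_Form.Determinant"
begin

type_synonym qt = "rat poly fract"

definition tvar :: qt where "tvar = Fract [:0, 1:] 1"

text \<open>Braid words: a letter (i, True) is the Artin generator sigma_(i+1) (0-based index i,
  acting on strands i and i+1), a letter (i, False) is its inverse.\<close>
type_synonym braid_word = "(nat \<times> bool) list"

definition valid_word :: "nat \<Rightarrow> braid_word \<Rightarrow> bool" where
  "valid_word n w \<longleftrightarrow> (\<forall>g \<in> set w. Suc (fst g) < n)"

definition burau_gen :: "nat \<Rightarrow> nat \<times> bool \<Rightarrow> qt mat" where
  "burau_gen n g = (let i = fst g; t = tvar in
     mat n n (\<lambda>(r, c).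
       if snd g then
         (if r = i \<and> c = i then 1 - t
          else if r = i \<and> c = Suc i then t
          else if r = Suc i \<and> c = i then 1
          else if r = Suc i \<and> c = Suc i then 0
          else if r = c then 1 else 0)
       else
         (if r = i \<and> c = i then 0
          else if r = i \<and> c = Suc i then 1
          else if r = Suc i \<and> c = i then inverse t
          else if r = Suc i \<and> c = Suc i then 1 - inverse t
          else if r = c then 1 else 0)))"

definition burau :: "nat \<Rightarrow> braid_word \<Rightarrow> qt mat" where
  "burau n w = foldr (\<lambda>g M. burau_gen n g * M) w (1\<^sub>m n)"

definition braid_perm :: "braid_word \<Rightarrow> nat \<Rightarrow> nat" where
  "braid_perm w = foldr (\<lambda>g p. transpose (fst g) (Suc (fst g)) \<circ> p) w id"

text \<open>The closure of the braid is a knot (one component) iff the strand permutation is a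
  single n-cycle, i.e. the orbit of strand 0 is all of {0..<n}.\<close>
definition closure_is_knot :: "nat \<Rightarrow> braid_word \<Rightarrow> bool" where
  "closure_is_knot n w \<longleftrightarrow> (\<forall>j < n. \<exists>k. (braid_perm w ^^ k) 0 = j)"

end

theory Submission
  imports Defs
begin

interpretation tf: comm_ring_hom "to_fract :: 'a::idom \<Rightarrow> 'a fract"
  by unfold_locales auto

interpretation ev1: comm_ring_hom "\<lambda>p::rat poly. poly p 1"
  by unfold_locales auto

definition XX :: "rat poly" where "XX = [:0,1:]"

lemma tf_XX: "to_fract XX = tvar" by (simp add: XX_def tvar_def to_fract_def)
lemma tvar_nz: "tvar \<noteq> 0" unfolding tf_XX[symmetric] by (simp add: XX_def)

definition PG :: "nat \<Rightarrow> nat \<times> bool \<Rightarrow> rat poly mat" where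
  "PG n g = (let i = fst g in
     mat n n (\<lambda>(r, c).
       if snd g then
         (if r = i \<and> c = i then XX - XX*XX
          else if r = i \<and> c = Suc i then XX*XX
          else if r = Suc i \<and> c = i then XX
          else if r = Suc i \<and> c = Suc i then 0
          else if r = c then XX else 0)
       else
         (if r = i \<and> c = i then 0
          else if r = i \<and> c = Suc i then XX
          else if r = Suc i \<and> c = i then 1
          else if r = Suc i \<and> c = Suc i then XX - 1
          else if r = c then XX else 0)))"

lemma gen_rep: "r < n \<Longrightarrow> c < n \<Longrightarrow>
  burau_gen n g $$ (r,c) = inverse tvar * to_fract (PG n g $$ (r,c))"
  using tvar_nz
  by (auto simp: burau_gen_def PG_def Let_def tf_XX field_simps)

definition PW :: "nat \<Rightarrow> braid_word \<Rightarrow> rat poly mat" where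
  "PW n w = foldr (\<lambda>g M. PG n g * M) w (1\<^sub>m n)"

lemma PW_carrier: "PW n w \<in> carrier_mat n n"
  by (induction w) (auto simp: PW_def PG_def)

lemma burau_carrier: "burau n w \<in> carrier_mat n n"
  by (induction w) (auto simp: burau_def burau_gen_def)

lemma gen_carrier: "burau_gen n g \<in> carrier_mat n n" by (simp add: burau_gen_def Let_def)
lemma PG_carrier: "PG n g \<in> carrier_mat n n" by (simp add: PG_def Let_def)

lemma mult_entry: "A \<in> carrier_mat n n \<Longrightarrow> B \<in> carrier_mat n n \<Longrightarrow> r < n \<Longrightarrow> c < n \<Longrightarrow>
  (A * B) $$ (r,c) = (\<Sum>k<n. A $$ (r,k) * B $$ (k,c))"
  by (simp add: scalar_prod_def atLeast0LessThan)

lemma PW_Cons: "PW n (g#w) = PG n g * PW n w" by (simp add: PW_def)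
lemma burau_Cons: "burau n (g#w) = burau_gen n g * burau n w" by (simp add: burau_def)

lemma burau_rep: "r < n \<Longrightarrow> c < n \<Longrightarrow>
  burau n w $$ (r,c) = inverse tvar ^ length w * to_fract (PW n w $$ (r,c))"
proof (induction w arbitrary: r c)
  case Nil
  then show ?case by (simp add: burau_def PW_def)
next
  case (Cons g w)
  have "burau n (g#w) $$ (r,c) = (\<Sum>k<n. burau_gen n g $$ (r,k) * burau n w $$ (k,c))"
    using Cons.prems
    by (simp add: burau_Cons mult_entry[OF gen_carrier burau_carrier])
  also have "\<dots> = (\<Sum>k<n. inverse tvar ^ length (g#w) * to_fract (PG n g $$ (r,k) * PW n w $$ (k,c)))"
    using Cons by (intro sum.cong) (auto simp: gen_rep)
  also have "\<dots> = inverse tvar ^ length (g#w) * to_fract (PW n (g#w) $$ (r,c))"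
    using Cons.prems
    by (simp add: PW_Cons mult_entry[OF PG_carrier PW_carrier] tf.hom_sum sum_distrib_left)
  finally show ?case .
qed

lemma perm_Cons: "braid_perm (g#w) = transpose (fst g) (Suc (fst g)) \<circ> braid_perm w"
  by (simp add: braid_perm_def)

lemma perm_bij: "bij (braid_perm w)"
proof (induction w)
  case Nil
  then show ?case unfolding braid_perm_def by (simp add: bij_def)
next
  case (Cons g w)
  then show ?case by (metis perm_Cons bij_comp bij_transpose)
qed

lemma valid_Cons: "valid_word n (g#w) \<longleftrightarrow> Suc (fst g) < n \<and> valid_word n w"
  by (simp add: valid_word_def)

lemma perm_lt: "valid_word n w \<Longrightarrow> c < n \<Longrightarrow> braid_perm w c < n"
  by (induction w) (auto simp: braid_perm_def valid_word_def transpose_def)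

lemma PG_eval: "Suc (fst g) < n \<Longrightarrow> r < n \<Longrightarrow> k < n \<Longrightarrow>
   poly (PG n g $$ (r,k)) 1 = (if k = transpose (fst g) (Suc (fst g)) r then 1 else 0)"
  by (auto simp: PG_def Let_def XX_def transpose_def)

lemma PW_eval: "valid_word n w \<Longrightarrow> r < n \<Longrightarrow> c < n \<Longrightarrow>
   poly (PW n w $$ (r,c)) 1 = (if r = braid_perm w c then 1 else 0)"
proof (induction w arbitrary: r c)
  case Nil
  then show ?case by (simp add: PW_def braid_perm_def)
next
  case (Cons g w)
  let ?t = "transpose (fst g) (Suc (fst g))"
  have v: "Suc (fst g) < n" "valid_word n w" using Cons.prems by (auto simp: valid_Cons)
  have pc: "braid_perm w c < n" using perm_lt[OF v(2) Cons.prems(3)] .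
  have "poly (PW n (g#w) $$ (r,c)) 1 = (\<Sum>k<n. poly (PG n g $$ (r,k)) 1 * poly (PW n w $$ (k,c)) 1)"
    using Cons.prems by (simp add: PW_Cons mult_entry[OF PG_carrier PW_carrier] ev1.hom_sum)
  also have "\<dots> = (\<Sum>k<n. if k = braid_perm w c then (if k = ?t r then 1 else 0) else 0)"
    using Cons v by (intro sum.cong) (auto simp: PG_eval)
  also have "\<dots> = (if braid_perm w c = ?t r then 1 else 0)"
    using pc by (simp add: sum.delta)
  also have "\<dots> = (if r = braid_perm (g#w) c then 1 else 0)"
    by (auto simp: perm_Cons transpose_def)
  finally show ?case .
qed

lemma gen_rowsum: "Suc (fst g) < n \<Longrightarrow> r < n \<Longrightarrow> (\<Sum>c<n. burau_gen n g $$ (r,c)) = 1"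
proof -
  assume i: "Suc (fst g) < n" and r: "r < n"
  define i where "i = fst g"
  show ?thesis
  proof (cases "r = i \<or> r = Suc i")
    case True
    have "(\<Sum>c<n. burau_gen n g $$ (r,c)) = (\<Sum>c\<in>{i, Suc i}. burau_gen n g $$ (r,c))"
      using True i r by (intro sum.mono_neutral_right) (auto simp: burau_gen_def i_def Let_def)
    also have "\<dots> = 1" using True i r by (auto simp: burau_gen_def i_def Let_def)
    finally show ?thesis .
  next
    case False
    have "(\<Sum>c<n. burau_gen n g $$ (r,c)) = (\<Sum>c<n. if c = r then 1 else 0)"
      using False i r by (intro sum.cong) (auto simp: burau_gen_def i_def Let_def)
    also have "\<dots> = 1" using r by simp
    finally show ?thesis .
  qed
qed

lemma burau_rowsum: "valid_word n w \<Longrightarrow> r < n \<Longrightarrow> (\<Sum>c<n. burau n w $$ (r,c)) = 1"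
proof (induction w arbitrary: r)
  case Nil
  then show ?case by (simp add: burau_def)
next
  case (Cons g w)
  have v: "Suc (fst g) < n" "valid_word n w" using Cons.prems by (auto simp: valid_Cons)
  have "(\<Sum>c<n. burau n (g#w) $$ (r,c)) = (\<Sum>c<n. \<Sum>k<n. burau_gen n g $$ (r,k) * burau n w $$ (k,c))"
    using Cons.prems by (simp add: burau_Cons mult_entry[OF gen_carrier burau_carrier])
  also have "\<dots> = (\<Sum>k<n. burau_gen n g $$ (r,k) * (\<Sum>c<n. burau n w $$ (k,c)))"
    by (subst sum.swap) (simp add: sum_distrib_left)
  also have "\<dots> = (\<Sum>k<n. burau_gen n g $$ (r,k))"
    using Cons.IH[OF v(2)] by simp
  also have "\<dots> = 1" using gen_rowsum[OF v(1) Cons.prems(2)] .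
  finally show ?case .
qed


lemma orbit_zero:
  fixes p :: "nat \<Rightarrow> nat" and u :: "nat \<Rightarrow> 'a"
  assumes inj: "inj p" and cl: "\<forall>c<n. p c < n" and orb: "\<forall>j<n. \<exists>k. (p^^k) 0 = j" and n: "0 < n"
    and u0: "u (n-1) = z" and rel: "\<forall>c<n. p c \<noteq> n-1 \<longrightarrow> u (p c) = u c"
  shows "\<forall>j<n. u j = z"
proof -
  have lt: "(p^^k) 0 < n" for k
    by (induction k) (use n cl in auto)
  have "\<not> inj_on (\<lambda>k. (p^^k) 0) {..n}"
  proof
    assume "inj_on (\<lambda>k. (p^^k) 0) {..n}"
    then have "card {..n} \<le> card {..<n}"
      by (rule card_inj_on_le) (use lt in auto)
    then show False by simp
  qed
  then obtain i j where ij: "i \<noteq> j" "(p^^i) 0 = (p^^j) 0"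
    unfolding inj_on_def by blast
  have "\<exists>N>0. (p^^N) 0 = 0"
  proof -
    have *: "\<exists>N>0. (p^^N) 0 = 0" if "i < j" "(p^^i) 0 = (p^^j) 0" for i j
    proof -
      have "(p^^j) 0 = (p^^i) ((p^^(j-i)) 0)"
        using that(1) funpow_add[of i "j-i" p] by (simp add: o_def)
      then have "(p^^i) ((p^^(j-i)) 0) = (p^^i) 0" using that(2) by simp
      then have "(p^^(j-i)) 0 = 0" using inj_fn[OF inj, of i] by (simp add: inj_eq)
      then show ?thesis using that(1) by (intro exI[of _ "j-i"]) auto
    qed
    show ?thesis using ij * by (cases "i < j") (auto, metis linorder_neqE_nat)
  qed
  then obtain N where N: "N > 0" "(p^^N) 0 = 0" by blast
  have per: "(p^^(k*N)) 0 = 0" for k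
  proof (induction k)
    case 0 then show ?case by simp
  next
    case (Suc k)
    have "(p^^(Suc k * N)) 0 = (p^^N) ((p^^(k*N)) 0)"
      using funpow_add[of N "k*N" p] by (simp add: o_def)
    then show ?case using Suc N by simp
  qed
  have "n - 1 < n" using n by simp
  then obtain a where a: "(p^^a) 0 = n-1" using orb by blast
  have zm: "u ((p^^(a+m)) 0) = z" for m
  proof (induction m)
    case 0 then show ?case using a u0 by simp
  next
    case (Suc m)
    have x: "(p^^(a+Suc m)) 0 = p ((p^^(a+m)) 0)" by simp
    show ?case
    proof (cases "p ((p^^(a+m)) 0) = n-1")
      case True then show ?thesis using x u0 by simp
    next
      case False then show ?thesis using x rel lt Suc by simp
    qed
  qed
  show ?thesis
  proof (intro allI impI)
    fix j assume "j < n"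
    then obtain b where b: "(p^^b) 0 = j" using orb by auto
    have "(p^^(b + a*N)) 0 = (p^^b) ((p^^(a*N)) 0)"
      using funpow_add[of b "a*N" p] by (simp add: o_def)
    then have "(p^^(b + a*N)) 0 = j" using per b by simp
    moreover have "a \<le> a*N" using N by simp
    then have "b + a*N = a + (b + a*N - a)" by linarith
    ultimately show "u j = z" using zm by metis
  qed
qed


lemma detR_nz:
  fixes p :: "nat \<Rightarrow> nat"
  assumes inj: "inj p" and cl: "\<forall>c<n. p c < n" and orb: "\<forall>j<n. \<exists>k. (p^^k) 0 = j" and n: "0 < n"
  shows "det (mat (n-1) (n-1) (\<lambda>(i,j). (if i = j then 1 else 0) - (if i = p j then 1 else 0)) :: rat mat) \<noteq> 0"
    (is "det ?R \<noteq> 0")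
proof
  define m where "m = n - 1"
  have R: "?R \<in> carrier_mat m m" by (simp add: m_def)
  assume "det ?R = 0"
  then obtain v where v: "v \<in> carrier_vec m" "v \<noteq> 0\<^sub>v m" "?R *\<^sub>v v = 0\<^sub>v m"
    using det_0_iff_vec_prod_zero[OF R] by blast
  have eq: "v $ i = (\<Sum>j<m. if i = p j then v $ j else 0)" if i: "i < m" for i
  proof -
    have "0 = (?R *\<^sub>v v) $ i" using v(3) i by simp
    also have "\<dots> = (\<Sum>j<m. ((if i = j then 1 else 0) - (if i = p j then 1 else 0)) * v $ j)"
      using i v(1) by (simp add: scalar_prod_def m_def atLeast0LessThan)
    also have "\<dots> = (\<Sum>j<m. (if i = j then v $ j else 0) - (if i = p j then v $ j else 0))"
      by (intro sum.cong) auto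
    also have "\<dots> = (\<Sum>j<m. (if i = j then v $ j else 0)) - (\<Sum>j<m. if i = p j then v $ j else 0)"
      by (simp only: sum_subtractf)
    also have "\<dots> = v $ i - (\<Sum>j<m. if i = p j then v $ j else 0)"
      using i by simp
    finally show ?thesis by simp
  qed
  define u where "u j = (if j < m then v $ j else 0)" for j
  have "\<forall>j<n. u j = 0"
  proof (rule orbit_zero[OF inj cl orb n])
    show "u (n-1) = 0" by (simp add: u_def m_def)
    show "\<forall>c<n. p c \<noteq> n - 1 \<longrightarrow> u (p c) = u c"
    proof (intro allI impI)
      fix c assume c: "c < n" "p c \<noteq> n - 1"
      have pc: "p c < m" using c cl m_def by fastforce
      have "u (p c) = (\<Sum>j<m. if p c = p j then v $ j else 0)" using eq pc u_def by simp
      also have "\<dots> = (\<Sum>j<m. if c = j then v $ j else 0)"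
        using inj by (intro sum.cong) (auto simp: inj_eq)
      also have "\<dots> = u c" by (simp add: u_def)
      finally show "u (p c) = u c" .
    qed
  qed
  then have "v = 0\<^sub>v m"
  proof (intro eq_vecI)
    fix i assume "i < dim_vec (0\<^sub>v m :: rat vec)"
    then have "i < m" "i < n" by (auto simp: m_def)
    then show "v $ i = 0\<^sub>v m $ i" using \<open>\<forall>j<n. u j = 0\<close> by (auto simp: u_def)
  qed (use v(1) in auto)
  then show False using v(2) by simp
qed


theorem mainTheorem7:
  fixes n :: nat and w :: braid_word
    and A B C D :: "qt mat"
  assumes "n \<ge> 2"
    and "valid_word n w"
    and "closure_is_knot n w"
    and "split_block (burau n w) (n - 1) (n - 1) = (A, B, C, D)"
  shows "det (1\<^sub>m (n - 1) - A) \<noteq> 0 \<and>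
         (\<forall>Ainv \<in> carrier_mat (n - 1) (n - 1).
            (1\<^sub>m (n - 1) - A) * Ainv = 1\<^sub>m (n - 1) \<longrightarrow>
            D $$ (0, 0) + (C * Ainv * B) $$ (0, 0) = 1)"
proof -
  note n = assms(1) and val = assms(2) and knot = assms(3) and sb = assms(4)
  define m where "m = n - 1"
  define M where "M = burau n w"
  define p where "p = braid_perm w"
  define N where "N = length w"
  define c0 where "c0 = inverse tvar ^ N"
  have Mc: "M \<in> carrier_mat n n" using burau_carrier M_def by simp
  have nm: "n - m = 1" "n = Suc m" using n by (auto simp: m_def)
  have Adef: "A = mat m m (\<lambda>ij. M $$ ij)"
   and Bdef: "B = mat m 1 (\<lambda>(i,j). M $$ (i, j + m))"
   and Cdef: "C = mat 1 m (\<lambda>(i,j). M $$ (i + m, j))"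
   and Ddef: "D = mat 1 1 (\<lambda>(i,j). M $$ (i + m, j + m))"
    using sb Mc nm unfolding split_block_def M_def[symmetric] m_def[symmetric]
    by (auto simp: Let_def)
  have Ac: "A \<in> carrier_mat m m" by (simp add: Adef)
  define Q :: "rat poly mat" where "Q = mat m m (\<lambda>(i,j). (if i = j then XX^N else 0) - PW n w $$ (i,j))"
  have c0t: "c0 * tvar ^ N = 1" using tvar_nz by (simp add: c0_def power_inverse)
  have c0nz: "c0 \<noteq> 0" using tvar_nz by (simp add: c0_def)
  have IA: "1\<^sub>m m - A = c0 \<cdot>\<^sub>m map_mat to_fract Q"
  proof (rule eq_matI)
    fix i j assume ij: "i < dim_row (c0 \<cdot>\<^sub>m map_mat to_fract Q)" "j < dim_col (c0 \<cdot>\<^sub>m map_mat to_fract Q)"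
    then have ij': "i < m" "j < m" "i < n" "j < n" by (auto simp: Q_def m_def)
    have "(1\<^sub>m m - A) $$ (i,j) = (if i = j then 1 else 0) - c0 * to_fract (PW n w $$ (i,j))"
      using ij' Ac by (simp add: Adef M_def burau_rep c0_def N_def)
    also have "\<dots> = c0 * to_fract ((if i = j then XX^N else 0) - PW n w $$ (i,j))"
      using c0t by (auto simp: tf_XX tf.hom_power right_diff_distrib)
    also have "\<dots> = (c0 \<cdot>\<^sub>m map_mat to_fract Q) $$ (i,j)" using ij' by (simp add: Q_def)
    finally show "(1\<^sub>m m - A) $$ (i,j) = (c0 \<cdot>\<^sub>m map_mat to_fract Q) $$ (i,j)" .
  qed (auto simp: Q_def Adef)
  have pinj: "inj p" using perm_bij bij_is_inj p_def by blast
  have pcl: "\<forall>c<n. p c < n" using perm_lt[OF val] p_def by blast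
  have porb: "\<forall>j<n. \<exists>k. (p^^k) 0 = j" using knot p_def closure_is_knot_def by blast
  have RQ: "map_mat (\<lambda>q. poly q 1) Q =
      mat (n-1) (n-1) (\<lambda>(i,j). (if i = j then 1 else 0) - (if i = p j then 1 else 0))"
  proof (rule eq_matI)
    fix i j assume "i < dim_row (mat (n-1) (n-1) (\<lambda>(i,j). (if i = j then 1 else 0) - (if i = p j then 1 else 0)) :: rat mat)"
      "j < dim_col (mat (n-1) (n-1) (\<lambda>(i,j). (if i = j then 1 else 0) - (if i = p j then 1 else 0)) :: rat mat)"
    then have ij': "i < m" "j < m" "i < n" "j < n" by (auto simp: m_def)
    then show "map_mat (\<lambda>q. poly q 1) Q $$ (i,j) =
      mat (n-1) (n-1) (\<lambda>(i,j). (if i = j then 1 else 0) - (if i = p j then 1 else 0)) $$ (i,j)"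
      using PW_eval[OF val] by (simp add: Q_def XX_def p_def m_def)
  qed (auto simp: Q_def m_def)
  have "poly (det Q) 1 \<noteq> 0"
    using detR_nz[OF pinj pcl porb] n RQ ev1.hom_det[of Q] by simp
  then have "det Q \<noteq> 0" by auto
  then have det1: "det (1\<^sub>m m - A) \<noteq> 0"
    unfolding IA using c0nz by simp
  have rs: "r < n \<Longrightarrow> (\<Sum>c<n. M $$ (r,c)) = 1" for r
    using burau_rowsum[OF val] M_def by simp
  define E :: "qt mat" where "E = mat m 1 (\<lambda>_. 1)"
  have Ec: "E \<in> carrier_mat m 1" by (simp add: E_def)
  have BE: "B = (1\<^sub>m m - A) * E"
  proof (rule eq_matI)
    fix i j assume "i < dim_row ((1\<^sub>m m - A) * E)" "j < dim_col ((1\<^sub>m m - A) * E)"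
    then have ij: "i < m" "j = 0" using Ac by (auto simp: E_def)
    have "((1\<^sub>m m - A) * E) $$ (i,j) = (\<Sum>k<m. (1\<^sub>m m - A) $$ (i,k))"
      using ij Ac by (simp add: E_def scalar_prod_def atLeast0LessThan)
    also have "\<dots> = (\<Sum>k<m. (if i = k then 1 else 0) - M $$ (i,k))"
      using ij Ac by (intro sum.cong) (auto simp: Adef)
    also have "\<dots> = 1 - (\<Sum>k<m. M $$ (i,k))"
      using ij by (simp add: sum_subtractf)
    also have "\<dots> = M $$ (i, m)"
      using rs[of i] ij nm by (simp add: algebra_simps)
    also have "\<dots> = B $$ (i,j)" using ij by (simp add: Bdef)
    finally show "B $$ (i,j) = ((1\<^sub>m m - A) * E) $$ (i,j)" by simp
  qed (auto simp: Bdef E_def Adef)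
  have ident: "D $$ (0, 0) + (C * Ainv * B) $$ (0, 0) = 1"
    if Ai: "Ainv \<in> carrier_mat m m" and inv: "(1\<^sub>m m - A) * Ainv = 1\<^sub>m m" for Ainv
  proof -
    have IAc: "1\<^sub>m m - A \<in> carrier_mat m m" using Ac by (intro minus_carrier_mat) auto
    have li: "Ainv * (1\<^sub>m m - A) = 1\<^sub>m m"
      using mat_mult_left_right_inverse[OF IAc Ai inv] .
    have Cc: "C \<in> carrier_mat 1 m" by (simp add: Cdef)
    have "C * Ainv * B = C * (Ainv * (1\<^sub>m m - A)) * E"
      unfolding BE using Cc Ai IAc Ec
      by (simp add: assoc_mult_mat[of _ 1 m _ m _ 1] assoc_mult_mat[of _ 1 m _ m _ m] assoc_mult_mat[of _ m m _ m _ 1])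
    also have "\<dots> = C * E" using li Cc by simp
    finally have CE: "C * Ainv * B = C * E" .
    have "(C * E) $$ (0,0) = (\<Sum>k<m. M $$ (m, k))"
      by (simp add: Cdef E_def scalar_prod_def atLeast0LessThan)
    then have "D $$ (0, 0) + (C * Ainv * B) $$ (0, 0) = (\<Sum>k<m. M $$ (m, k)) + M $$ (m,m)"
      using CE by (simp add: Ddef)
    also have "\<dots> = 1" using rs[of m] nm by simp
    finally show ?thesis .
  qed
  show ?thesis using det1 ident unfolding m_def by blast
qed

end
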